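(* Let $A=\langle a\mid a^k=1\rangle$ be a cyclic group of order $k$, let $r$ be an integer with $1\le r<k$ and $\gcd(r,k)=1$, let $\varphi$ be the automorphism of $A$ given by $a\mapsto a^r$, let $m$ be the multiplicative order of $r$ modulo $k$, and let $n$ be a positive multiple of $m$. Let $G=A\langle c\rangle$ be any finite group containing $A$ and an element $c$ of order $n$ with $A\cap\langle c\rangle=\{1\}$ and $G=A\langle c\rangle$, such that the skew-morphism of $A$ determined by $c$ (namely the map $\psi:A\to A$ defined by $cx=\psi(x)c^{j}$ with $\psi(x)\in A$, $j\in\mathbb{Z}_n$) equals $\varphi$. Then $G$ has a presentation \[ G=\langle a,c\mid a^k=c^n=1,\ c^ma=ac^{mt},\ ca=a^rc^{1+ms}\rangle, \] where $s,t\in\mathbb{Z}_{n/m}$ satisfy: (a) $t^{r-1}\equiv1\pmod{n/m}$; (b) $s\sum_{i=1}^{k}t^{i-1}\equiv0\pmod{n/m}$; (c) $s\sum_{i=1}^{m}\big(\sum_{j=1}^{r}t^{j-1}\big)^{i-1}\equiv t-1\pmod{n/m}$.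
   Context: A skew-morphism of a finite group $A$ is a permutation $\varphi$ of $A$ with $\varphi(1_A)=1_A$ for which there is a function $\pi:A\to\mathbb{Z}_m$ ($m$ the order of $\varphi$) with $\varphi(xy)=\varphi(x)\varphi^{\pi(x)}(y)$ for all $x,y\in A$. If $G=A\langle c\rangle$ with $A\cap\langle c\rangle=\{1\}$ and $|c|=n$, then for each $x\in A$ there are unique $\psi(x)\in A$ and $j\in\mathbb{Z}_n$ with $cx=\psi(x)c^j$, and $\psi$ is a skew-morphism of $A$ (the skew-morphism determined by $c$). *)

theory Defs
  imports "HOL-Algebra.Algebra" "HOL-Number_Theory.Number_Theory"
begin

definition skew_of :: "('a, 'm) monoid_scheme \<Rightarrow> 'a set \<Rightarrow> 'a \<Rightarrow> 'a \<Rightarrow> 'a" where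
  "skew_of G A c x = (THE y. y \<in> A \<and> (\<exists>j::nat. c \<otimes>\<^bsub>G\<^esub> x = y \<otimes>\<^bsub>G\<^esub> (c [^]\<^bsub>G\<^esub> j)))"

definition rels :: "('b, 'n) monoid_scheme \<Rightarrow> 'b \<Rightarrow> 'b \<Rightarrow> nat \<Rightarrow> nat \<Rightarrow> nat \<Rightarrow> nat \<Rightarrow> nat \<Rightarrow> nat \<Rightarrow> bool" where
  "rels H x y k n m r s t \<longleftrightarrow>
     x [^]\<^bsub>H\<^esub> k = \<one>\<^bsub>H\<^esub> \<and> y [^]\<^bsub>H\<^esub> n = \<one>\<^bsub>H\<^esub> \<and>
     (y [^]\<^bsub>H\<^esub> m) \<otimes>\<^bsub>H\<^esub> x = x \<otimes>\<^bsub>H\<^esub> (y [^]\<^bsub>H\<^esub> (m * t)) \<and>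
     y \<otimes>\<^bsub>H\<^esub> x = (x [^]\<^bsub>H\<^esub> r) \<otimes>\<^bsub>H\<^esub> (y [^]\<^bsub>H\<^esub> (1 + m * s))"

text \<open>G is presented by generators a, c and the relations above: a, c generate G,
  satisfy the relations, and G has the universal property of the presented group
  (any pair of elements of a group H satisfying the relations is the image of (a,c)
  under a homomorphism G \<rightarrow> H).  The target groups H range over the type 'b.\<close>
definition presented_by ::
  "('a, 'm) monoid_scheme \<Rightarrow> 'a \<Rightarrow> 'a \<Rightarrow> nat \<Rightarrow> nat \<Rightarrow> nat \<Rightarrow> nat \<Rightarrow> nat \<Rightarrow> nat \<Rightarrow> 'b itself \<Rightarrow> bool" where
  "presented_by G a c k n m r s t (_ :: 'b itself) \<longleftrightarrow>
     a \<in> carrier G \<and> c \<in> carrier G \<and> generate G {a, c} = carrier G \<and>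
     rels G a c k n m r s t \<and>
     (\<forall>(H :: 'b monoid) x y. group H \<and> x \<in> carrier H \<and> y \<in> carrier H \<and> rels H x y k n m r s t
        \<longrightarrow> (\<exists>h \<in> hom G H. h a = x \<and> h c = y))"

end

theory Submission
  imports Defs
begin


definition gg :: "nat \<Rightarrow> nat \<Rightarrow> nat \<Rightarrow> nat \<Rightarrow> nat" where
  "gg m s t i = 1 + m * s * (\<Sum>l<i. t ^ l)"

primrec FF :: "nat \<Rightarrow> nat \<Rightarrow> nat \<Rightarrow> nat \<Rightarrow> nat \<Rightarrow> nat \<Rightarrow> nat" where
  "FF m r s t 0 i = 0"
| "FF m r s t (Suc l) i = gg m s t (r ^ l * i) + FF m r s t l i"

context group begin

lemma pow_comm1: "x \<in> carrier G \<Longrightarrow> x [^] (i::nat) \<otimes> x = x \<otimes> x [^] i"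
  by (metis nat_pow_Suc nat_pow_Suc2)

lemma R0:
  fixes m t u :: nat
  assumes x: "x \<in> carrier G" and y: "y \<in> carrier G"
    and h: "y [^] m \<otimes> x = x \<otimes> y [^] (m * t)"
  shows "y [^] (m * u) \<otimes> x = x \<otimes> y [^] (m * u * t)"
proof (induction u)
  case 0
  then show ?case using x by simp
next
  case (Suc u)
  have "y [^] (m * Suc u) \<otimes> x = y [^] m \<otimes> (y [^] (m * u) \<otimes> x)"
    using x y by (simp add: m_assoc[symmetric] nat_pow_mult)
  also have "\<dots> = (y [^] m \<otimes> x) \<otimes> y [^] (m * u * t)"
    using Suc x y by (simp add: m_assoc)
  also have "\<dots> = x \<otimes> (y [^] (m * t) \<otimes> y [^] (m * u * t))"
    using h x y by (simp add: m_assoc)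
  also have "\<dots> = x \<otimes> y [^] (m * Suc u * t)"
    using y by (simp add: nat_pow_mult algebra_simps)
  finally show ?case .
qed

lemma R1:
  fixes m t u i :: nat
  assumes x: "x \<in> carrier G" and y: "y \<in> carrier G"
    and h: "y [^] m \<otimes> x = x \<otimes> y [^] (m * t)"
  shows "y [^] (m * u) \<otimes> x [^] i = x [^] i \<otimes> y [^] (m * u * t ^ i)"
proof (induction i arbitrary: u)
  case 0
  then show ?case using y by simp
next
  case (Suc i)
  have xs: "x [^] Suc i = x \<otimes> x [^] i" by (rule nat_pow_Suc2[OF x])
  have "y [^] (m * u) \<otimes> x [^] Suc i = (y [^] (m * u) \<otimes> x) \<otimes> x [^] i"
    using x y by (simp only: xs m_assoc nat_pow_closed)
  also have "\<dots> = x \<otimes> (y [^] (m * (u * t)) \<otimes> x [^] i)"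
    using R0[OF x y h, of u] x y by (simp add: m_assoc mult.assoc)
  also have "\<dots> = x \<otimes> (x [^] i \<otimes> y [^] (m * (u * t) * t ^ i))"
    using Suc by simp
  also have "\<dots> = (x \<otimes> x [^] i) \<otimes> y [^] (m * (u * t) * t ^ i)"
    using x y by (simp only: m_assoc nat_pow_closed)
  also have "m * (u * t) * t ^ i = m * u * t ^ Suc i" by simp
  finally show ?case using xs by simp
qed

lemma R2:
  fixes m t r s i :: nat
  assumes x: "x \<in> carrier G" and y: "y \<in> carrier G"
    and h: "y [^] m \<otimes> x = x \<otimes> y [^] (m * t)"
    and h2: "y \<otimes> x = x [^] r \<otimes> y [^] (1 + m * s)"
  shows "y \<otimes> x [^] i = x [^] (r * i) \<otimes> y [^] (gg m s t i)"
proof (induction i)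
  case 0
  then show ?case using y by (simp add: gg_def)
next
  case (Suc i)
  have xs: "x [^] Suc i = x \<otimes> x [^] i" by (rule nat_pow_Suc2[OF x])
  have ys: "y [^] (1 + m * s) = y \<otimes> y [^] (m * s)"
    using nat_pow_Suc2[OF y, of "m * s"] by simp
  have "y \<otimes> x [^] Suc i = (y \<otimes> x) \<otimes> x [^] i"
    using x y by (simp only: xs m_assoc nat_pow_closed)
  also have "\<dots> = x [^] r \<otimes> (y \<otimes> (y [^] (m * s) \<otimes> x [^] i))"
    using x y by (simp only: h2 ys m_assoc nat_pow_closed m_closed)
  also have "\<dots> = x [^] r \<otimes> (y \<otimes> (x [^] i \<otimes> y [^] (m * s * t ^ i)))"
    using R1[OF x y h, of s i] by simp
  also have "\<dots> = x [^] r \<otimes> ((y \<otimes> x [^] i) \<otimes> y [^] (m * s * t ^ i))"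
    using x y by (simp only: m_assoc nat_pow_closed)
  also have "\<dots> = x [^] r \<otimes> ((x [^] (r * i) \<otimes> y [^] (gg m s t i)) \<otimes> y [^] (m * s * t ^ i))"
    using Suc by simp
  also have "\<dots> = (x [^] r \<otimes> x [^] (r * i)) \<otimes> (y [^] (gg m s t i) \<otimes> y [^] (m * s * t ^ i))"
    using x y by (simp only: m_assoc nat_pow_closed m_closed)
  also have "\<dots> = x [^] (r + r * i) \<otimes> y [^] (gg m s t i + m * s * t ^ i)"
    using x y by (simp only: nat_pow_mult)
  also have "r + r * i = r * Suc i" by simp
  also have "gg m s t i + m * s * t ^ i = gg m s t (Suc i)"
    by (simp add: gg_def algebra_simps)
  finally show ?case .
qed

lemma R3:
  fixes m t r s i l :: nat
  assumes x: "x \<in> carrier G" and y: "y \<in> carrier G"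
    and h: "y [^] m \<otimes> x = x \<otimes> y [^] (m * t)"
    and h2: "y \<otimes> x = x [^] r \<otimes> y [^] (1 + m * s)"
  shows "y [^] l \<otimes> x [^] i = x [^] (r ^ l * i) \<otimes> y [^] (FF m r s t l i)"
proof (induction l arbitrary: i)
  case 0
  then show ?case using x by simp
next
  case (Suc l)
  have "y [^] Suc l \<otimes> x [^] i = y \<otimes> (y [^] l \<otimes> x [^] i)"
    using x y by (simp only: nat_pow_Suc2[OF y] m_assoc nat_pow_closed)
  also have "\<dots> = (y \<otimes> x [^] (r ^ l * i)) \<otimes> y [^] (FF m r s t l i)"
    using Suc x y by (simp add: m_assoc)
  also have "\<dots> = x [^] (r * (r ^ l * i)) \<otimes> (y [^] (gg m s t (r ^ l * i)) \<otimes> y [^] (FF m r s t l i))"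
    using R2[OF x y h h2, of "r ^ l * i"] x y by (simp add: m_assoc)
  also have "\<dots> = x [^] (r ^ Suc l * i) \<otimes> y [^] (FF m r s t (Suc l) i)"
    using x y by (simp add: nat_pow_mult mult.assoc)
  finally show ?case .
qed

lemma R4:
  fixes m t r s i l i' l' :: nat
  assumes x: "x \<in> carrier G" and y: "y \<in> carrier G"
    and h: "y [^] m \<otimes> x = x \<otimes> y [^] (m * t)"
    and h2: "y \<otimes> x = x [^] r \<otimes> y [^] (1 + m * s)"
  shows "(x [^] i \<otimes> y [^] l) \<otimes> (x [^] i' \<otimes> y [^] l') =
         x [^] (i + r ^ l * i') \<otimes> y [^] (FF m r s t l i' + l')"
proof -
  have "(x [^] i \<otimes> y [^] l) \<otimes> (x [^] i' \<otimes> y [^] l') = x [^] i \<otimes> ((y [^] l \<otimes> x [^] i') \<otimes> y [^] l')"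
    using x y by (simp add: m_assoc)
  also have "\<dots> = x [^] i \<otimes> (x [^] (r ^ l * i') \<otimes> (y [^] (FF m r s t l i') \<otimes> y [^] l'))"
    using R3[OF x y h h2] x y by (simp add: m_assoc)
  also have "\<dots> = x [^] (i + r ^ l * i') \<otimes> y [^] (FF m r s t l i' + l')"
    using x y by (simp add: m_assoc[symmetric] nat_pow_mult)
  finally show ?thesis .
qed

lemma pow_eq_cong:
  assumes x: "x \<in> carrier G"
  shows "x [^] (i::nat) = x [^] (j::nat) \<longleftrightarrow> [i = j] (mod ord x)"
proof -
  have "x [^] (i::nat) = x [^] (j::nat) \<longleftrightarrow> x [^] int i = x [^] int j" by (simp add: int_pow_int)
  also have "\<dots> \<longleftrightarrow> int (ord x) dvd (int j - int i)" using int_pow_eq[OF x] by simp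
  also have "\<dots> \<longleftrightarrow> [int i = int j] (mod int (ord x))"
    by (metis cong_iff_dvd_diff cong_sym)
  also have "\<dots> \<longleftrightarrow> [i = j] (mod ord x)" by (simp add: cong_int_iff)
  finally show ?thesis .
qed

lemma pow_cong_eq:
  assumes x: "x \<in> carrier G" and "x [^] k = \<one>" and "[i = j] (mod k)"
  shows "x [^] (i::nat) = x [^] (j::nat)"
proof -
  have "ord x dvd k" using assms pow_eq_id by blast
  then show ?thesis using assms pow_eq_cong cong_dvd_modulus_nat by blast
qed

lemma unique_decomp:
  assumes "subgroup A G" "subgroup C G" "A \<inter> C = {\<one>}"
    and "p \<in> A" "p' \<in> A" "q \<in> C" "q' \<in> C" "p \<otimes> q = p' \<otimes> q'"
  shows "p = p' \<and> q = q'"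
proof -
  have c: "p \<in> carrier G" "p' \<in> carrier G" "q \<in> carrier G" "q' \<in> carrier G"
    using assms subgroup.subset by blast+
  have e: "inv p' \<otimes> p = q' \<otimes> inv q"
  proof -
    have "inv p' \<otimes> p = inv p' \<otimes> (p \<otimes> q) \<otimes> inv q" using c by (simp add: m_assoc)
    also have "\<dots> = inv p' \<otimes> (p' \<otimes> q') \<otimes> inv q" using assms by simp
    also have "\<dots> = q' \<otimes> inv q" using c by (simp add: m_assoc[symmetric])
    finally show ?thesis .
  qed
  have "inv p' \<otimes> p \<in> A" using assms subgroup.m_closed subgroup.m_inv_closed by metis
  moreover have "q' \<otimes> inv q \<in> C" using assms subgroup.m_closed subgroup.m_inv_closed by metis
  ultimately have "inv p' \<otimes> p = \<one>" using e assms by auto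
  then have 1: "p = p'" using c by (metis inv_closed inv_inv inv_equality)
  then have "q = q'" using assms(8) c l_cancel by metis
  with 1 show ?thesis by simp
qed

end


lemma cancel_m:
  fixes m x y N :: nat
  assumes "m > 0" "[m * x = m * y] (mod m * N)"
  shows "[x = y] (mod N)"
  using assms by (simp add: cong_def mult_mod_right[symmetric])

lemma modred:
  fixes m q N :: nat
  shows "[m * q = m * (q mod N)] (mod m * N)"
  by (simp add: cong_def mult_mod_right[symmetric])

lemma sum_shift1:
  fixes f :: "nat \<Rightarrow> 'a::comm_monoid_add"
  shows "(\<Sum>i=1..n. f (i - 1)) = (\<Sum>i<n. f i)"
  by (induction n) (auto simp: add.commute)

lemma sum_split:
  fixes f :: "nat \<Rightarrow> 'a::comm_monoid_add"
  shows "(\<Sum>u<a + b. f u) = (\<Sum>u<a. f u) + (\<Sum>v<b. f (a + v))"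
  by (induction b) (auto simp: add.assoc)

lemma S_mult:
  fixes t r N q :: nat
  assumes tr: "[t ^ r = t] (mod N)"
  shows "[(\<Sum>u<r * q. t ^ u) = (\<Sum>u<q. t ^ u) * (\<Sum>u<r. t ^ u)] (mod N)"
proof (induction q)
  case 0
  then show ?case by simp
next
  case (Suc q)
  have "(\<Sum>u<r * Suc q. t ^ u) = (\<Sum>u<r * q. t ^ u) + (\<Sum>v<r. t ^ (r * q + v))"
    using sum_split[of "\<lambda>u. t ^ u" "r * q" r] by (simp add: add.commute)
  also have "(\<Sum>v<r. t ^ (r * q + v)) = t ^ (r * q) * (\<Sum>u<r. t ^ u)"
    by (simp add: power_add sum_distrib_left)
  finally have e: "(\<Sum>u<r * Suc q. t ^ u) = (\<Sum>u<r * q. t ^ u) + t ^ (r * q) * (\<Sum>u<r. t ^ u)" .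
  have "[t ^ (r * q) = t ^ q] (mod N)"
    using cong_pow[OF tr, of q] by (simp add: power_mult)
  then have "[(\<Sum>u<r * q. t ^ u) + t ^ (r * q) * (\<Sum>u<r. t ^ u)
      = (\<Sum>u<q. t ^ u) * (\<Sum>u<r. t ^ u) + t ^ q * (\<Sum>u<r. t ^ u)] (mod N)"
    using Suc by (intro cong_add cong_mult cong_refl)
  moreover have "(\<Sum>u<q. t ^ u) * (\<Sum>u<r. t ^ u) + t ^ q * (\<Sum>u<r. t ^ u)
      = (\<Sum>u<Suc q. t ^ u) * (\<Sum>u<r. t ^ u)"
    by (simp add: distrib_right)
  ultimately show ?case using e by simp
qed

lemma S_pow:
  fixes t r N w :: nat
  assumes tr: "[t ^ r = t] (mod N)"
  shows "[(\<Sum>u<r ^ w. t ^ u) = (\<Sum>u<r. t ^ u) ^ w] (mod N)"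
proof (induction w)
  case 0
  then show ?case by simp
next
  case (Suc w)
  have "[(\<Sum>u<r * r ^ w. t ^ u) = (\<Sum>u<r ^ w. t ^ u) * (\<Sum>u<r. t ^ u)] (mod N)"
    by (rule S_mult[OF tr])
  moreover have "[(\<Sum>u<r ^ w. t ^ u) * (\<Sum>u<r. t ^ u) = (\<Sum>u<r. t ^ u) ^ w * (\<Sum>u<r. t ^ u)] (mod N)"
    using Suc by (intro cong_mult cong_refl)
  ultimately have "[(\<Sum>u<r * r ^ w. t ^ u) = (\<Sum>u<r. t ^ u) ^ w * (\<Sum>u<r. t ^ u)] (mod N)"
    by (rule cong_trans)
  then show ?case by (simp add: mult.commute)
qed

lemma FF_formula:
  "FF m r s t l i = l + m * s * (\<Sum>w<l. \<Sum>u<r ^ w * i. t ^ u)"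
  by (induction l) (simp_all add: gg_def algebra_simps)

lemma tpow:
  fixes t r k N :: nat
  assumes tk: "[t ^ k = 1] (mod N)" and tr: "[t ^ r = t] (mod N)" and "k \<ge> 1" "r \<ge> 1"
  shows "[t ^ (r - 1) = 1] (mod N)"
proof -
  have "[t ^ (r - 1) * 1 = t ^ (r - 1) * t ^ k] (mod N)"
    by (intro cong_mult cong_refl cong_sym[OF tk])
  also have "t ^ (r - 1) * t ^ k = t ^ r * t ^ (k - 1)"
    using assms(3,4) by (simp add: power_add[symmetric])
  also have "[t ^ r * t ^ (k - 1) = t * t ^ (k - 1)] (mod N)"
    using tr by (intro cong_mult cong_refl)
  also have "t * t ^ (k - 1) = t ^ k"
    using assms(3) by (metis Suc_diff_le diff_Suc_1 power_Suc)
  also have "[t ^ k = 1] (mod N)" by (rule tk)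
  finally show ?thesis by simp
qed

theorem theorem1p2:
  fixes G (structure) and a c :: 'a and k r n :: nat
  assumes "group G" and "finite (carrier G)"
    and "a \<in> carrier G" and "c \<in> carrier G"
    and "group.ord G a = k"
    and "1 \<le> r" and "r < k" and "coprime r k"
    and "n > 0" and "ord k r dvd n"
    and "group.ord G c = n"
    and "generate G {a} \<inter> generate G {c} = {\<one>}"
    and "carrier G = generate G {a} <#> generate G {c}"
    and "\<forall>i::nat. skew_of G (generate G {a}) c (a [^] i) = a [^] (r * i)"
  shows "\<exists>s t :: nat. s < n div ord k r \<and> t < n div ord k r \<and>
     [t ^ (r - 1) = 1] (mod (n div ord k r)) \<and>
     [s * (\<Sum>i=1..k. t ^ (i - 1)) = 0] (mod (n div ord k r)) \<and>
     [int s * (\<Sum>i=1..ord k r. (\<Sum>j=1..r. int t ^ (j - 1)) ^ (i - 1)) = int t - 1]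
        (mod int (n div ord k r)) \<and>
     presented_by G a c k n (ord k r) r s t TYPE('b)"
proof -
  define m where "m = ord k r"
  define N where "N = n div m"
  have k1: "k \<ge> 2" using assms(6,7) by linarith
  have cop: "coprime k r" using assms(8) by (simp add: coprime_commute)
  have m0: "m > 0" using cop ord_eq_0[of k r] unfolding m_def by simp
  have rm: "[r ^ m = 1] (mod k)" unfolding m_def by (rule ord_works[THEN conjunct1])
  have ordiv: "\<And>d. [r ^ d = 1] (mod k) \<Longrightarrow> m dvd d" unfolding m_def using ord_divides by blast
  have nmN: "n = m * N" using assms(10) unfolding N_def m_def by simp
  have N0: "N > 0" using nmN assms(9) by (cases N) auto
  interpret group G by fact
  note fin = assms(2) and ac = assms(3,4) and ka = assms(5) and nc = assms(11)
  define A where "A = generate G {a}"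
  define C where "C = generate G {c}"
  have Aeq: "A = {a [^] i | i. i \<in> (UNIV :: nat set)}"
    unfolding A_def by (rule generate_pow_on_finite_carrier[OF fin ac(1)])
  have Ceq: "C = {c [^] i | i. i \<in> (UNIV :: nat set)}"
    unfolding C_def by (rule generate_pow_on_finite_carrier[OF fin ac(2)])
  have sgA: "subgroup A G" unfolding A_def using ac by (intro generate_is_subgroup) auto
  have sgC: "subgroup C G" unfolding C_def using ac by (intro generate_is_subgroup) auto
  have AC: "A \<inter> C = {\<one>}" unfolding A_def C_def by (rule assms(12))
  have aA: "\<And>i::nat. a [^] i \<in> A" using Aeq by blast
  have cC: "\<And>i::nat. c [^] i \<in> C" using Ceq by blast
  have UD: "a [^] i \<otimes> c [^] l = a [^] i' \<otimes> c [^] l' \<Longrightarrow> a [^] i = a [^] i' \<and> c [^] l = c [^] l'"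
    for i l i' l' :: nat
    using unique_decomp[OF sgA sgC AC aA aA cC cC] by blast
  have dec: "\<exists>(i::nat) (l::nat). z = a [^] i \<otimes> c [^] l" if "z \<in> carrier G" for z
  proof -
    have "z \<in> A <#> C" using that assms(13) unfolding A_def C_def by simp
    then obtain p q where "p \<in> A" "q \<in> C" "z = p \<otimes> q" unfolding set_mult_def by blast
    moreover obtain i :: nat where "p = a [^] i" using \<open>p \<in> A\<close> Aeq by blast
    moreover obtain l :: nat where "q = c [^] l" using \<open>q \<in> C\<close> Ceq by blast
    ultimately show ?thesis by blast
  qed
  have apow: "a [^] i = a [^] j \<longleftrightarrow> [i = j] (mod k)" for i j :: nat
    using pow_eq_cong[OF ac(1)] ka by simp
  have cpow: "c [^] i = c [^] j \<longleftrightarrow> [i = j] (mod m * N)" for i j :: nat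
    using pow_eq_cong[OF ac(2)] nc nmN by simp
  have cn1: "c [^] n = \<one>" using nc pow_ord_eq_1[OF ac(2)] by simp
  have ak1: "a [^] k = \<one>" using ka pow_ord_eq_1[OF ac(1)] by simp
  have skew: "\<exists>j::nat. c \<otimes> a [^] i = a [^] (r * i) \<otimes> c [^] j" for i :: nat
  proof -
    have "c \<otimes> a [^] i \<in> carrier G" using ac by simp
    then obtain i0 l0 :: nat where e: "c \<otimes> a [^] i = a [^] i0 \<otimes> c [^] l0" using dec by blast
    have "skew_of G A c (a [^] i) = a [^] i0"
      unfolding skew_of_def
    proof (rule the_equality)
      show "a [^] i0 \<in> A \<and> (\<exists>j::nat. c \<otimes> a [^] i = a [^] i0 \<otimes> c [^] j)" using e aA by blast
    next
      fix y assume y: "y \<in> A \<and> (\<exists>j::nat. c \<otimes> a [^] i = y \<otimes> c [^] j)"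
      then obtain j :: nat where "c \<otimes> a [^] i = y \<otimes> c [^] j" by blast
      then have "y \<otimes> c [^] j = a [^] i0 \<otimes> c [^] l0" using e by simp
      then show "y = a [^] i0" using unique_decomp[OF sgA sgC AC _ aA cC cC] y by blast
    qed
    moreover have "skew_of G A c (a [^] i) = a [^] (r * i)" using assms(14) unfolding A_def by blast
    ultimately show ?thesis using e by metis
  qed
  have L1: "\<exists>e::nat. c [^] l \<otimes> a [^] i = a [^] (r ^ l * i) \<otimes> c [^] e" for l i :: nat
  proof (induction l arbitrary: i)
    case 0
    show ?case by (rule exI[of _ 0]) (simp add: ac)
  next
    case (Suc l)
    obtain e :: nat where e: "c [^] l \<otimes> a [^] i = a [^] (r ^ l * i) \<otimes> c [^] e" using Suc by blast
    obtain j :: nat where j: "c \<otimes> a [^] (r ^ l * i) = a [^] (r * (r ^ l * i)) \<otimes> c [^] j" using skew by blast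
    have "c [^] Suc l \<otimes> a [^] i = c \<otimes> (c [^] l \<otimes> a [^] i)"
      using ac by (simp only: nat_pow_Suc2 m_assoc nat_pow_closed)
    also have "\<dots> = (c \<otimes> a [^] (r ^ l * i)) \<otimes> c [^] e" using e ac by (simp add: m_assoc)
    also have "\<dots> = a [^] (r * (r ^ l * i)) \<otimes> (c [^] j \<otimes> c [^] e)" using j ac by (simp add: m_assoc)
    also have "\<dots> = a [^] (r ^ Suc l * i) \<otimes> c [^] (j + e)" using ac by (simp add: nat_pow_mult mult.assoc)
    finally show ?case by blast
  qed
  have L3: "\<exists>q::nat. c \<otimes> a [^] i = a [^] (r * i) \<otimes> c [^] (1 + m * q)" for i :: nat
  proof -
    obtain j0 :: nat where j0: "c \<otimes> a [^] i = a [^] (r * i) \<otimes> c [^] j0" using skew by blast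
    define J where "J = j0 + n"
    have J1: "J \<ge> 1" using assms(9) unfolding J_def by simp
    have "c [^] J = c [^] j0" unfolding J_def using ac cn1 by (simp add: nat_pow_mult[symmetric])
    then have jJ: "c \<otimes> a [^] i = a [^] (r * i) \<otimes> c [^] J" using j0 by simp
    obtain e :: nat where e: "c [^] J \<otimes> a = a [^] (r ^ J) \<otimes> c [^] e"
      using L1[of J 1] ac by auto
    obtain j1 :: nat where j1: "c \<otimes> a [^] Suc i = a [^] (r * Suc i) \<otimes> c [^] j1" using skew by blast
    have "c \<otimes> a [^] Suc i = (c \<otimes> a [^] i) \<otimes> a" using ac by (simp add: m_assoc)
    also have "\<dots> = a [^] (r * i) \<otimes> (c [^] J \<otimes> a)" using jJ ac by (simp add: m_assoc)
    also have "\<dots> = (a [^] (r * i) \<otimes> a [^] (r ^ J)) \<otimes> c [^] e" using e ac by (simp add: m_assoc)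
    also have "\<dots> = a [^] (r * i + r ^ J) \<otimes> c [^] e" using ac by (simp add: nat_pow_mult)
    finally have "a [^] (r * i + r ^ J) = a [^] (r * Suc i)" using j1 UD by metis
    then have "[r * i + r ^ J = r * i + r] (mod k)" using apow by (simp add: add.commute)
    then have "[r ^ J = r] (mod k)" by (simp add: cong_add_lcancel_nat)
    moreover have "r ^ J = r ^ (J - 1) * r" using J1 by (metis Suc_diff_le diff_Suc_1 power_Suc2)
    ultimately have "[r ^ (J - 1) * r = 1 * r] (mod k)" by simp
    then have "[r ^ (J - 1) = 1] (mod k)" using cong_mult_rcancel_nat assms(8) by blast
    then obtain q where "J - 1 = m * q" using ordiv by blast
    then have "J = 1 + m * q" using J1 by simp
    then show ?thesis using jJ by blast
  qed
  have L4: "\<exists>q::nat. c [^] l \<otimes> a [^] i = a [^] (r ^ l * i) \<otimes> c [^] (l + m * q)" for l i :: nat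
  proof (induction l arbitrary: i)
    case 0
    show ?case by (rule exI[of _ 0]) (simp add: ac)
  next
    case (Suc l)
    obtain e :: nat where e: "c [^] l \<otimes> a [^] i = a [^] (r ^ l * i) \<otimes> c [^] (l + m * e)" using Suc by blast
    obtain j :: nat where j: "c \<otimes> a [^] (r ^ l * i) = a [^] (r * (r ^ l * i)) \<otimes> c [^] (1 + m * j)" using L3 by blast
    have "c [^] Suc l \<otimes> a [^] i = c \<otimes> (c [^] l \<otimes> a [^] i)"
      using ac by (simp only: nat_pow_Suc2 m_assoc nat_pow_closed)
    also have "\<dots> = (c \<otimes> a [^] (r ^ l * i)) \<otimes> c [^] (l + m * e)" using e ac by (simp add: m_assoc)
    also have "\<dots> = a [^] (r * (r ^ l * i)) \<otimes> (c [^] (1 + m * j) \<otimes> c [^] (l + m * e))" using j ac by (simp add: m_assoc)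
    also have "\<dots> = a [^] (r * (r ^ l * i)) \<otimes> c [^] ((1 + m * j) + (l + m * e))"
      using ac by (simp only: nat_pow_mult)
    also have "(1 + m * j) + (l + m * e) = Suc l + m * (j + e)" by (simp add: algebra_simps)
    also have "r * (r ^ l * i) = r ^ Suc l * i" by simp
    finally show ?case by blast
  qed
  obtain q1 :: nat where q1: "c \<otimes> a = a [^] r \<otimes> c [^] (1 + m * q1)" using L3[of 1] ac by auto
  define s where "s = q1 mod N"
  have "c [^] (1 + m * q1) = c [^] (1 + m * s)"
    unfolding cpow s_def by (intro cong_add cong_refl modred)
  then have rel2: "c \<otimes> a = a [^] r \<otimes> c [^] (1 + m * s)" using q1 by simp
  obtain q2 :: nat where q2: "c [^] m \<otimes> a = a [^] (r ^ m) \<otimes> c [^] (m + m * q2)" using L4[of m 1] ac by auto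
  have arm: "a [^] (r ^ m) = a" using apow[of "r ^ m" 1] rm ac by simp
  define t where "t = (1 + q2) mod N"
  have "c [^] (m + m * q2) = c [^] (m * t)"
    unfolding cpow t_def using modred[of m "1 + q2" N] by (simp add: algebra_simps)
  then have rel1: "c [^] m \<otimes> a = a \<otimes> c [^] (m * t)" using q2 arm by simp
  have relsG: "rels G a c k n m r s t"
    unfolding rels_def using ak1 cn1 rel1 rel2 by simp
  have sN: "s < N" and tN: "t < N" unfolding s_def t_def using N0 by auto
  have RG1: "c [^] (m * u) \<otimes> a [^] i = a [^] i \<otimes> c [^] (m * u * t ^ i)" for u i :: nat
    by (rule R1[OF ac rel1])
  have RG2: "c \<otimes> a [^] i = a [^] (r * i) \<otimes> c [^] (gg m s t i)" for i :: nat
    by (rule R2[OF ac rel1 rel2])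
  have RG3: "c [^] l \<otimes> a [^] i = a [^] (r ^ l * i) \<otimes> c [^] (FF m r s t l i)" for l i :: nat
    by (rule R3[OF ac rel1 rel2])
  have condb: "[s * (\<Sum>i=1..k. t ^ (i - 1)) = 0] (mod N)"
  proof -
    have "a [^] (r * k) = \<one>" using ak1 ac by (simp add: nat_pow_pow[symmetric] mult.commute)
    then have "c [^] (1::nat) = c [^] (gg m s t k)" using RG2[of k] ak1 ac by simp
    then have "[1 = gg m s t k] (mod m * N)" using cpow by blast
    then have "[m * 0 + 1 = m * (s * (\<Sum>l<k. t ^ l)) + 1] (mod m * N)" by (simp add: gg_def mult.assoc add.commute)
    then have "[m * 0 = m * (s * (\<Sum>l<k. t ^ l))] (mod m * N)" by (simp only: cong_add_rcancel_nat)
    then have "[0 = s * (\<Sum>l<k. t ^ l)] (mod N)" using cancel_m[OF m0] by blast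
    then show ?thesis using sum_shift1[of "\<lambda>u. t ^ u" k] by (simp add: cong_sym_eq)
  qed
  have tk: "[t ^ k = 1] (mod N)"
  proof -
    have "c [^] (m * 1) = c [^] (m * 1 * t ^ k)" using RG1[of 1 k] ak1 ac by simp
    then have "[m * 1 = m * t ^ k] (mod m * N)" using cpow by simp
    then show ?thesis using cancel_m[OF m0] cong_sym by blast
  qed
  have tr: "[t ^ r = t] (mod N)"
  proof -
    have "c [^] m \<otimes> (c \<otimes> a) = c [^] m \<otimes> (a [^] r \<otimes> c [^] (1 + m * s))" using rel2 by simp
    also have "\<dots> = (c [^] (m * 1) \<otimes> a [^] r) \<otimes> c [^] (1 + m * s)" using ac by (simp add: m_assoc)
    also have "\<dots> = (a [^] r \<otimes> c [^] (m * 1 * t ^ r)) \<otimes> c [^] (1 + m * s)" using RG1[of 1 r] by simp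
    also have "\<dots> = a [^] r \<otimes> c [^] (m * 1 * t ^ r + (1 + m * s))"
      using ac by (simp only: m_assoc nat_pow_closed nat_pow_mult)
    also have "m * 1 * t ^ r = m * t ^ r" by simp
    finally have w1: "c [^] m \<otimes> (c \<otimes> a) = a [^] r \<otimes> c [^] (m * t ^ r + (1 + m * s))" .
    have "c [^] m \<otimes> (c \<otimes> a) = (c [^] m \<otimes> c) \<otimes> a" using ac by (simp add: m_assoc)
    also have "\<dots> = c \<otimes> (c [^] m \<otimes> a)" using ac by (simp add: m_assoc pow_comm1)
    also have "\<dots> = (c \<otimes> a) \<otimes> c [^] (m * t)" using rel1 ac by (simp add: m_assoc)
    also have "\<dots> = (a [^] r \<otimes> c [^] (1 + m * s)) \<otimes> c [^] (m * t)" using rel2 by simp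
    also have "\<dots> = a [^] r \<otimes> c [^] ((1 + m * s) + m * t)"
      using ac by (simp only: m_assoc nat_pow_closed nat_pow_mult)
    also have "(1 + m * s) + m * t = m * t + (1 + m * s)" by simp
    finally have "a [^] r \<otimes> c [^] (m * t ^ r + (1 + m * s)) = a [^] r \<otimes> c [^] (m * t + (1 + m * s))" using w1 by simp
    then have "c [^] (m * t ^ r + (1 + m * s)) = c [^] (m * t + (1 + m * s))" using UD by blast
    then have "[m * t ^ r + (1 + m * s) = m * t + (1 + m * s)] (mod m * N)" using cpow by blast
    then have "[m * t ^ r = m * t] (mod m * N)" by (simp only: cong_add_rcancel_nat)
    then show ?thesis using cancel_m[OF m0] by blast
  qed
  have conda: "[t ^ (r - 1) = 1] (mod N)" using tpow[OF tk tr] k1 assms(6) by simp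
  define RR where "RR = (\<Sum>u<r. t ^ u)"
  define YY where "YY = (\<Sum>w<m. RR ^ w)"
  have condc0: "[1 + s * YY = t] (mod N)"
  proof -
    define XX where "XX = (\<Sum>w<m. \<Sum>u<r ^ w * 1. t ^ u)"
    have "a \<otimes> c [^] (FF m r s t m 1) = a \<otimes> c [^] (m * t)"
      using RG3[of m 1] rel1 arm ac by simp
    then have "c [^] (FF m r s t m 1) = c [^] (m * t)" using ac l_cancel by (meson nat_pow_closed)
    then have "[m * (1 + s * XX) = m * t] (mod m * N)" using cpow FF_formula[of m r s t m 1]
      unfolding XX_def by (simp add: algebra_simps)
    then have h1: "[1 + s * XX = t] (mod N)" using cancel_m[OF m0] by blast
    have "[XX = YY] (mod N)" unfolding XX_def YY_def RR_def using S_pow[OF tr] by (simp add: cong_sum)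
    then have "[1 + s * YY = 1 + s * XX] (mod N)" by (intro cong_add cong_mult cong_refl) (rule cong_sym)
    then show ?thesis using h1 by (rule cong_trans)
  qed
  have condc: "[int s * (\<Sum>i=1..m. (\<Sum>j=1..r. int t ^ (j - 1)) ^ (i - 1)) = int t - 1] (mod int N)"
  proof -
    have e1: "(\<Sum>j=1..r. int t ^ (j - 1)) = int RR"
      unfolding RR_def using sum_shift1[of "\<lambda>u. int t ^ u" r] by simp
    have e2: "(\<Sum>i=1..m. (int RR) ^ (i - 1)) = int YY"
      unfolding YY_def using sum_shift1[of "\<lambda>u. int RR ^ u" m] by simp
    have "[int (1 + s * YY) = int t] (mod int N)" using condc0 by (simp only: cong_int_iff)
    then have "[1 + int s * int YY = int t] (mod int N)" by simp
    then have "[1 + int s * int YY - 1 = int t - 1] (mod int N)"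
      by (intro cong_diff cong_refl) simp
    then show ?thesis using e1 e2 by simp
  qed
  have gen: "generate G {a, c} = carrier G"
  proof
    show "generate G {a, c} \<subseteq> carrier G" using ac by (intro generate_incl) auto
  next
    show "carrier G \<subseteq> generate G {a, c}"
    proof
      fix z assume "z \<in> carrier G"
      then obtain i l :: nat where z: "z = a [^] i \<otimes> c [^] l" using dec by blast
      have "generate G {a} \<subseteq> generate G {a, c}" by (intro mono_generate) auto
      moreover have "generate G {c} \<subseteq> generate G {a, c}" by (intro mono_generate) auto
      ultimately have "a [^] i \<in> generate G {a, c}" "c [^] l \<in> generate G {a, c}"
        using aA cC unfolding A_def C_def by auto
      then show "z \<in> generate G {a, c}" unfolding z by (rule generate.eng)
    qed
  qed
  have univ: "\<exists>h \<in> hom G H. h a = x \<and> h c = y"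
    if H: "group H" and xy: "x \<in> carrier H" "y \<in> carrier H" and rH: "rels H x y k n m r s t"
    for H :: "'b monoid" and x y
  proof -
    interpret H: group H by (rule H)
    have xk: "x [^]\<^bsub>H\<^esub> k = \<one>\<^bsub>H\<^esub>" and yn: "y [^]\<^bsub>H\<^esub> n = \<one>\<^bsub>H\<^esub>"
      and h1: "y [^]\<^bsub>H\<^esub> m \<otimes>\<^bsub>H\<^esub> x = x \<otimes>\<^bsub>H\<^esub> y [^]\<^bsub>H\<^esub> (m * t)"
      and h2: "y \<otimes>\<^bsub>H\<^esub> x = x [^]\<^bsub>H\<^esub> r \<otimes>\<^bsub>H\<^esub> y [^]\<^bsub>H\<^esub> (1 + m * s)"
      using rH unfolding rels_def by auto
    define h where "h z = (let p = (SOME p. z = a [^] (fst p :: nat) \<otimes> c [^] (snd p :: nat))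
        in x [^]\<^bsub>H\<^esub> fst p \<otimes>\<^bsub>H\<^esub> y [^]\<^bsub>H\<^esub> snd p)" for z
    have hv: "h (a [^] i \<otimes> c [^] l) = x [^]\<^bsub>H\<^esub> i \<otimes>\<^bsub>H\<^esub> y [^]\<^bsub>H\<^esub> l" for i l :: nat
    proof -
      define p where "p = (SOME p. a [^] i \<otimes> c [^] l = a [^] (fst p :: nat) \<otimes> c [^] (snd p :: nat))"
      have "a [^] i \<otimes> c [^] l = a [^] (fst p :: nat) \<otimes> c [^] (snd p :: nat)"
        unfolding p_def by (rule someI[of _ "(i, l)"]) simp
      then have "a [^] i = a [^] fst p" "c [^] l = c [^] snd p" using UD by blast+
      then have "[i = fst p] (mod k)" "[l = snd p] (mod n)"
        using apow cpow nmN by auto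
      then have "x [^]\<^bsub>H\<^esub> i = x [^]\<^bsub>H\<^esub> fst p" "y [^]\<^bsub>H\<^esub> l = y [^]\<^bsub>H\<^esub> snd p"
        using H.pow_cong_eq xy xk yn by blast+
      then show ?thesis unfolding h_def p_def[symmetric] Let_def by simp
    qed
    have "h \<in> hom G H"
    proof (rule homI)
      fix z assume "z \<in> carrier G"
      then obtain i l :: nat where "z = a [^] i \<otimes> c [^] l" using dec by blast
      then show "h z \<in> carrier H" using hv xy by simp
    next
      fix z1 z2 assume "z1 \<in> carrier G" "z2 \<in> carrier G"
      then obtain i l i' l' :: nat where z: "z1 = a [^] i \<otimes> c [^] l" "z2 = a [^] i' \<otimes> c [^] l'"
        using dec by meson
      have "z1 \<otimes> z2 = a [^] (i + r ^ l * i') \<otimes> c [^] (FF m r s t l i' + l')"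
        unfolding z by (rule R4[OF ac rel1 rel2])
      then have "h (z1 \<otimes> z2) = x [^]\<^bsub>H\<^esub> (i + r ^ l * i') \<otimes>\<^bsub>H\<^esub> y [^]\<^bsub>H\<^esub> (FF m r s t l i' + l')"
        using hv by simp
      also have "\<dots> = (x [^]\<^bsub>H\<^esub> i \<otimes>\<^bsub>H\<^esub> y [^]\<^bsub>H\<^esub> l) \<otimes>\<^bsub>H\<^esub> (x [^]\<^bsub>H\<^esub> i' \<otimes>\<^bsub>H\<^esub> y [^]\<^bsub>H\<^esub> l')"
        by (rule H.R4[OF xy h1 h2, symmetric])
      finally show "h (z1 \<otimes> z2) = h z1 \<otimes>\<^bsub>H\<^esub> h z2" using hv z by simp
    qed
    moreover have "h a = x" using hv[of 1 0] ac xy by simp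
    moreover have "h c = y" using hv[of 0 1] ac xy by simp
    ultimately show ?thesis by blast
  qed
  have pres: "presented_by G a c k n m r s t TYPE('b)"
    unfolding presented_by_def using ac gen relsG univ by blast
  show ?thesis
    unfolding m_def[symmetric] N_def[symmetric]
    using sN tN conda condb condc pres by blast
qed

end
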